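(* Let $p$ be prime, $d>1$ an integer, $N\ge1$, and let $P_d^N$ be the degree-$d$ powering map ($(x_1,\dots,x_N)\mapsto(x_1^d,\dots,x_N^d)$ on $\mathbb{A}^N$, $[x_0:\cdots:x_N]\mapsto[x_0^d:\cdots:x_N^d]$ on $\mathbb{P}^N$). Let $m^-$ be the largest divisor of $p-1$ relatively prime to $d$. For a positive integer $k$ let $\delta_k=1$ if $k=1$ and $\delta_k=0$ otherwise, and for a divisor $e$ of $m^-$ let $o(e)$ denote the multiplicative order of $d$ modulo $e$ (with $o(1)=1$). Then for every positive integer $k$, $$\#\mathrm{Per}_k(P_d^N,\mathbb{A}^N(\mathbb{F}_p))=\delta_k+\sum_{I=1}^N\ \sum_{\substack{(k_1,\dots,k_I),\ k_i\mid m^-\\ \mathrm{lcm}(o(k_1),\dots,o(k_I))=k}}\binom{N}{I}\prod_{i=1}^I\varphi(k_i),$$ $$\#\mathrm{Per}_k(P_d^N,\mathbb{P}^N(\mathbb{F}_p))=\sum_{D=0}^N\Bigg(\delta_k+\sum_{I=1}^D\ \sum_{\substack{(k_1,\dots,k_I),\ k_i\mid m^-\\ \mathrm{lcm}(o(k_1),\dots,o(k_I))=k}}\binom{D}{I}\prod_{i=1}^I\varphi(k_i)\Bigg),$$ where $\varphi$ is Euler's totient function. Furthermore, $$\#\mathrm{Per}(P_d^N,\mathbb{A}^N(\mathbb{F}_p))=1+\sum_{I=1}^N\binom{N}{I}\sum_{\substack{(k_1,\dots,k_I)\\ k_i\mid m^-}}\prod_{i=1}^I\varphi(k_i)=(m^-+1)^N,$$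 $$\#\mathrm{Per}(P_d^N,\mathbb{P}^N(\mathbb{F}_p))=\sum_{D=0}^N\Bigg(1+\sum_{I=1}^D\binom{D}{I}\sum_{\substack{(k_1,\dots,k_I)\\ k_i\mid m^-}}\prod_{i=1}^I\varphi(k_i)\Bigg)=\sum_{D=0}^N(m^-+1)^D.$$
   Context: For a self-map $F$ of a finite set $S$, the minimal period of a periodic point $x$ is the least $n\ge1$ with $F^n(x)=x$; $\mathrm{Per}_k(F,S)$ is the set of points of $S$ of minimal period exactly $k$, and $\mathrm{Per}(F,S)=\bigcup_{k\ge1}\mathrm{Per}_k(F,S)$. Inner sums range over ordered $I$-tuples of positive divisors of $m^-$. *)

theory Defs
  imports "HOL-Number_Theory.Number_Theory"
begin

definition Per_k :: "('a \<Rightarrow> 'a) \<Rightarrow> 'a set \<Rightarrow> nat \<Rightarrow> 'a set" where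
  "Per_k F S k = {x \<in> S. k \<ge> 1 \<and> (F ^^ k) x = x \<and> (\<forall>j. 1 \<le> j \<and> j < k \<longrightarrow> (F ^^ j) x \<noteq> x)}"

definition Per :: "('a \<Rightarrow> 'a) \<Rightarrow> 'a set \<Rightarrow> 'a set" where
  "Per F S = (\<Union>k\<in>{1..}. Per_k F S k)"

(* F_p is represented by residues {0..<p}; affine space A^n(F_p) by lists of length n *)
definition affine_space :: "nat \<Rightarrow> nat \<Rightarrow> nat list set" where
  "affine_space p n = {xs. length xs = n \<and> (\<forall>a\<in>set xs. a < p)}"

definition pow_map :: "nat \<Rightarrow> nat \<Rightarrow> nat list \<Rightarrow> nat list" where
  "pow_map p d xs = map (\<lambda>a. a ^ d mod p) xs"

definition proj_class :: "nat \<Rightarrow> nat list \<Rightarrow> nat list set" where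
  "proj_class p xs = {map (\<lambda>a. c * a mod p) xs | c. c \<in> {1..<p}}"

definition proj_space :: "nat \<Rightarrow> nat \<Rightarrow> nat list set set" where
  "proj_space p n = {proj_class p xs | xs. xs \<in> affine_space p (Suc n) \<and> (\<exists>a\<in>set xs. a \<noteq> 0)}"

definition proj_pow_map :: "nat \<Rightarrow> nat \<Rightarrow> nat list set \<Rightarrow> nat list set" where
  "proj_pow_map p d C = proj_class p (pow_map p d (SOME xs. xs \<in> C))"

definition m_minus :: "nat \<Rightarrow> nat \<Rightarrow> nat" where
  "m_minus p d = (GREATEST m. m dvd (p - 1) \<and> coprime m d)"

definition div_tuples :: "nat \<Rightarrow> nat \<Rightarrow> nat list set" where
  "div_tuples m I = {ks. length ks = I \<and> (\<forall>k\<in>set ks. k dvd m)}"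

end

theory Submission
  imports Defs
begin


lemma m_minus_props:
  assumes "prime p"
  shows "m_minus p d dvd (p - 1)" "coprime (m_minus p d) d"
    "\<And>e. e dvd (p - 1) \<Longrightarrow> coprime e d \<Longrightarrow> e dvd m_minus p d"
    "m_minus p d > 0"
proof -
  let ?P = "\<lambda>m. m dvd (p - 1) \<and> coprime m d"
  have p1: "p - 1 > 0" using prime_gt_1_nat[OF assms] by simp
  have b: "\<And>y. ?P y \<Longrightarrow> y \<le> p - 1" using p1 by (simp add: dvd_imp_le)
  have P1: "?P 1" by simp
  have G: "?P (m_minus p d)" unfolding m_minus_def by (rule GreatestI_nat[of ?P 1 "p - 1", OF P1 b])
  then show "m_minus p d dvd (p - 1)" "coprime (m_minus p d) d" by auto
  have le: "\<And>y. ?P y \<Longrightarrow> y \<le> m_minus p d" unfolding m_minus_def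
    by (rule Greatest_le_nat[of ?P _ "p - 1", OF _ b])
  show "m_minus p d > 0" using le[OF P1] by simp
  fix e assume e: "e dvd (p - 1)" "coprime e d"
  let ?l = "lcm e (m_minus p d)"
  have cl: "coprime ?l d" using e G
    by (metis coprime_mult_left_iff dvd_def dvd_triv_right lcm_least)
  have "?P ?l" using e G cl by (auto intro: lcm_least)
  hence "?l \<le> m_minus p d" by (rule le)
  moreover have "m_minus p d dvd ?l" by simp
  moreover have "?l > 0" using e(1) p1 using \<open>m_minus p d > 0\<close> by (auto intro!: lcm_pos_nat Nat.gr0I)
  ultimately have "?l = m_minus p d" by (meson dvd_imp_le le_antisym)
  thus "e dvd m_minus p d" by (metis dvd_lcm1)
qed

definition fpow :: "nat \<Rightarrow> nat \<Rightarrow> nat \<Rightarrow> nat" where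
  "fpow p d a = a ^ d mod p"

lemma fpow_iter:
  assumes "a < p" shows "(fpow p d ^^ j) a = a ^ (d ^ j) mod p"
proof (induction j)
  case 0 then show ?case using assms by simp
next
  case (Suc j)
  then show ?case by (simp add: fpow_def power_mod power_mult[symmetric] mult.commute)
qed

definition per :: "nat \<Rightarrow> nat \<Rightarrow> nat \<Rightarrow> nat" where
  "per p d a = (if a = 0 then 1 else ord (ord p a) d)"

lemma per_iff:
  assumes "prime p" "d > 0" "a < p"
  shows "(fpow p d ^^ j) a = a \<longleftrightarrow> per p d a dvd j"
proof (cases "a = 0")
  case True
  then show ?thesis using assms by (simp add: fpow_iter per_def power_0_left)
next
  case False
  have cop: "coprime a p" using assms False
    by (metis prime_nat_iff'' prime_gt_1_nat coprime_commute neq0_conv)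
  have dj: "d ^ j \<ge> 1" using assms by simp
  have "(fpow p d ^^ j) a = a \<longleftrightarrow> [a ^ (d ^ j) = a] (mod p)"
    using assms by (simp add: fpow_iter cong_def)
  also have "a ^ (d ^ j) = a * a ^ (d ^ j - 1)" using dj
    by (metis One_nat_def Suc_diff_le diff_Suc_1 power_Suc)
  also have "[a * a ^ (d ^ j - 1) = a] (mod p) \<longleftrightarrow> [a * a ^ (d ^ j - 1) = a * 1] (mod p)" by simp
  also have "\<dots> \<longleftrightarrow> [a ^ (d ^ j - 1) = 1] (mod p)" using cop by (rule cong_mult_lcancel_nat)
  also have "\<dots> \<longleftrightarrow> ord p a dvd (d ^ j - 1)" by (rule ord_divides)
  also have "\<dots> \<longleftrightarrow> [d ^ j = 1] (mod ord p a)" using dj by (simp add: cong_altdef_nat)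
  also have "\<dots> \<longleftrightarrow> ord (ord p a) d dvd j" by (rule ord_divides)
  finally show ?thesis using False by (simp add: per_def)
qed


lemma totatives_prime_eq: "prime p \<Longrightarrow> totatives p = {1..<p}"
  unfolding totatives_def
proof safe
  fix x assume "prime p" "x \<in> {0<..p}" "coprime x p"
  then show "x \<in> {1..<p}" using prime_gt_1_nat[of p]
    by (cases "x = p") auto
next
  fix x assume "prime p" "x \<in> {1..<p}"
  then show "x \<in> {0<..p}" by auto
  show "coprime x p" using \<open>prime p\<close> \<open>x \<in> {1..<p}\<close>
    by (metis atLeastLessThan_iff coprime_commute less_le_not_le prime_nat_iff'' not_one_le_zero neq0_conv)
qed

lemma ord_dvd_pm1:
  assumes "prime p" "x \<in> {1..<p}" shows "ord p x dvd (p - 1)"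
proof -
  have "\<not> p dvd x" using assms by (auto dest: dvd_imp_le)
  then have "[x ^ (p - 1) = 1] (mod p)" using assms fermat_theorem by blast
  then show ?thesis using ord_divides by blast
qed

lemma card_ord_eq:
  assumes "prime p" "e dvd (p - 1)"
  shows "card {x \<in> {1..<p}. ord p x = e} = totient e"
  using prime_card_elements_with_ord_eq_totient[of p e] assms prime_gt_1_nat[of p]
  by (simp add: totatives_prime_eq)

lemma sum_per:
  fixes g :: "nat \<Rightarrow> nat"
  assumes "prime p" "d > 1" "g 0 = 0"
  shows "(\<Sum>x<p. g (per p d x)) = g 1 + (\<Sum>e | e dvd m_minus p d. totient e * g (ord e d))"
proof -
  have p1: "p > 1" using prime_gt_1_nat[OF assms(1)] .
  have fin: "finite {e. e dvd (p - 1)}" using p1 by (auto intro: finite_divisors_nat)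
  have "{..<p} = insert 0 {1..<p}" using p1 by auto
  hence "(\<Sum>x<p. g (per p d x)) = g 1 + (\<Sum>x\<in>{1..<p}. g (per p d x))"
    by (simp add: per_def)
  also have "(\<Sum>x\<in>{1..<p}. g (per p d x))
      = (\<Sum>e\<in>{e. e dvd (p - 1)}. \<Sum>x\<in>{x \<in> {1..<p}. ord p x = e}. g (per p d x))"
    by (rule sum.group[symmetric]) (use fin ord_dvd_pm1[OF assms(1)] in auto)
  also have "\<dots> = (\<Sum>e\<in>{e. e dvd (p - 1)}. totient e * g (ord e d))"
  proof (rule sum.cong[OF refl])
    fix e assume e: "e \<in> {e. e dvd (p - 1)}"
    have "(\<Sum>x\<in>{x \<in> {1..<p}. ord p x = e}. g (per p d x))
        = (\<Sum>x\<in>{x \<in> {1..<p}. ord p x = e}. g (ord e d))"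
      by (rule sum.cong) (auto simp: per_def)
    also have "\<dots> = totient e * g (ord e d)" using card_ord_eq[OF assms(1)] e by simp
    finally show "(\<Sum>x\<in>{x \<in> {1..<p}. ord p x = e}. g (per p d x)) = totient e * g (ord e d)" .
  qed
  also have "\<dots> = (\<Sum>e | e dvd m_minus p d. totient e * g (ord e d))"
  proof (rule sum.mono_neutral_right[OF fin])
    show "{e. e dvd m_minus p d} \<subseteq> {e. e dvd (p - 1)}"
      using m_minus_props(1)[OF assms(1)] by (auto intro: dvd_trans)
    show "\<forall>i\<in>{e. e dvd (p - 1)} - {e. e dvd m_minus p d}. totient i * g (ord i d) = 0"
    proof
      fix i assume "i \<in> {e. e dvd (p - 1)} - {e. e dvd m_minus p d}"
      then have "\<not> coprime i d" using m_minus_props(3)[OF assms(1)] by auto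
      then show "totient i * g (ord i d) = 0" using assms(3) by simp
    qed
  qed
  finally show ?thesis .
qed



definition LL :: "'a set \<Rightarrow> nat \<Rightarrow> 'a list set" where
  "LL U n = {xs. length xs = n \<and> set xs \<subseteq> U}"

lemma LL_finite: "finite U \<Longrightarrow> finite (LL U n)"
  unfolding LL_def using finite_lists_length_eq[of U n] by (simp add: conj_commute)

lemma LL_0: "LL U 0 = {[]}" by (auto simp: LL_def)

lemma LL_Suc: "LL U (Suc n) = (\<lambda>(x, xs). x # xs) ` (U \<times> LL U n)"
  unfolding LL_def
proof safe
  fix xs :: "'a list" assume "length xs = Suc n" "set xs \<subseteq> U"
  then show "xs \<in> (\<lambda>(x, xs). x # xs) ` (U \<times> {xs. length xs = n \<and> set xs \<subseteq> U})"
    by (cases xs) (auto intro!: image_eqI)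
qed auto

lemma sum_LL_Suc:
  assumes "finite U"
  shows "sum F (LL U (Suc n)) = (\<Sum>x\<in>U. \<Sum>xs\<in>LL U n. F (x # xs))"
proof -
  have inj: "inj_on (\<lambda>(x, xs). x # xs) (U \<times> LL U n)" by (auto simp: inj_on_def)
  have "sum F (LL U (Suc n)) = sum (F \<circ> (\<lambda>(x, xs). x # xs)) (U \<times> LL U n)"
    unfolding LL_Suc by (rule sum.reindex[OF inj])
  also have "\<dots> = (\<Sum>x\<in>U. \<Sum>xs\<in>LL U n. F (x # xs))"
    unfolding sum.cartesian_product by (simp add: comp_def case_prod_unfold)
  finally show ?thesis .
qed

lemma Lcm_insert2: "Lcm (insert (c::nat) (insert a S)) = Lcm (insert (lcm c a) S)"
  by (simp add: lcm.assoc)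

definition Acnt :: "nat \<Rightarrow> nat \<Rightarrow> nat \<Rightarrow> nat \<Rightarrow> nat \<Rightarrow> nat" where
  "Acnt p d N c k = (\<Sum>xs\<in>LL {..<p} N. if Lcm (insert c (set (map (per p d) xs))) = k then 1 else 0)"

definition Tsum :: "nat \<Rightarrow> nat \<Rightarrow> nat \<Rightarrow> nat \<Rightarrow> nat \<Rightarrow> nat" where
  "Tsum m d I c k = (\<Sum>ks\<in>LL {e. e dvd m} I.
     if Lcm (insert c (set (map (\<lambda>e. ord e d) ks))) = k then prod_list (map totient ks) else 0)"

definition Bsum :: "nat \<Rightarrow> nat \<Rightarrow> nat \<Rightarrow> nat \<Rightarrow> nat \<Rightarrow> nat" where
  "Bsum m d N c k = (\<Sum>I\<le>N. (N choose I) * Tsum m d I c k)"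

lemma Acnt_0: "Acnt p d 0 c k = (if c = k then 1 else 0)"
  by (simp add: Acnt_def LL_0)

lemma Tsum_0: "Tsum m d 0 c k = (if c = k then 1 else 0)"
  by (simp add: Tsum_def LL_0)

lemma Acnt_Suc: "Acnt p d (Suc N) c k = (\<Sum>x<p. Acnt p d N (lcm c (per p d x)) k)"
  unfolding Acnt_def by (subst sum_LL_Suc) (auto simp: Lcm_insert2 simp del: Lcm_insert)

lemma Acnt_Suc':
  assumes "prime p" "d > 1" "k \<ge> 1"
  shows "Acnt p d (Suc N) c k = Acnt p d N c k
     + (\<Sum>e | e dvd m_minus p d. totient e * Acnt p d N (lcm c (ord e d)) k)"
proof -
  have g0: "Acnt p d N (lcm c 0) k = 0" using assms(3)
    by (simp add: Acnt_def)
  show ?thesis unfolding Acnt_Suc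
    using sum_per[OF assms(1,2), of "\<lambda>v. Acnt p d N (lcm c v) k"] g0 by simp
qed

lemma Tsum_Suc:
  assumes "m > 0"
  shows "Tsum m d (Suc I) c k = (\<Sum>e | e dvd m. totient e * Tsum m d I (lcm c (ord e d)) k)"
proof -
  have fin: "finite {e. e dvd m}" using assms by (auto intro: finite_divisors_nat)
  show ?thesis
    unfolding Tsum_def sum_LL_Suc[OF fin]
    by (auto simp: Lcm_insert2 sum_distrib_left simp del: Lcm_insert intro!: sum.cong)
qed

lemma Bsum_0: "Bsum m d 0 c k = (if c = k then 1 else 0)"
  by (simp add: Bsum_def Tsum_0)

lemma Bsum_Suc:
  assumes "m > 0"
  shows "Bsum m d (Suc N) c k = Bsum m d N c k
     + (\<Sum>e | e dvd m. totient e * Bsum m d N (lcm c (ord e d)) k)"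
proof -
  let ?T = "\<lambda>I. Tsum m d I c k"
  have "Bsum m d (Suc N) c k = ?T 0 + (\<Sum>i\<le>N. (Suc N choose Suc i) * ?T (Suc i))"
    unfolding Bsum_def by (subst sum.atMost_Suc_shift) simp
  also have "\<dots> = (?T 0 + (\<Sum>i\<le>N. (N choose Suc i) * ?T (Suc i)))
                  + (\<Sum>i\<le>N. (N choose i) * ?T (Suc i))"
    by (simp add: sum.distrib algebra_simps)
  also have "?T 0 + (\<Sum>i\<le>N. (N choose Suc i) * ?T (Suc i)) = (\<Sum>i\<le>Suc N. (N choose i) * ?T i)"
    by (subst sum.atMost_Suc_shift) simp
  also have "\<dots> = Bsum m d N c k" unfolding Bsum_def by simp
  also have "(\<Sum>i\<le>N. (N choose i) * ?T (Suc i))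
      = (\<Sum>i\<le>N. \<Sum>e | e dvd m. (N choose i) * (totient e * Tsum m d i (lcm c (ord e d)) k))"
    by (simp add: Tsum_Suc[OF assms] sum_distrib_left)
  also have "\<dots> = (\<Sum>e | e dvd m. \<Sum>i\<le>N. (N choose i) * (totient e * Tsum m d i (lcm c (ord e d)) k))"
    by (rule sum.swap)
  also have "\<dots> = (\<Sum>e | e dvd m. totient e * Bsum m d N (lcm c (ord e d)) k)"
    unfolding Bsum_def by (simp add: sum_distrib_left mult.left_commute)
  finally show ?thesis .
qed

lemma Acnt_Bsum:
  assumes "prime p" "d > 1" "k \<ge> 1"
  shows "Acnt p d N c k = Bsum (m_minus p d) d N c k"
  using assms
proof (induction N arbitrary: c)
  case 0 then show ?case by (simp add: Acnt_0 Bsum_0)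
next
  case (Suc N)
  then show ?case
    by (simp add: Acnt_Suc' Bsum_Suc m_minus_props(4))
qed



lemma affine_LL: "affine_space p N = LL {..<p} N"
  by (auto simp: affine_space_def LL_def)

lemma div_tuples_LL: "div_tuples m I = LL {e. e dvd m} I"
  by (auto simp: div_tuples_def LL_def)

lemma pow_map_iter: "(pow_map p d ^^ j) xs = map (fpow p d ^^ j) xs"
  by (induction j) (auto simp: pow_map_def fpow_def)

lemma pow_map_fix_iff:
  assumes "prime p" "d > 1" "xs \<in> affine_space p N"
  shows "(pow_map p d ^^ j) xs = xs \<longleftrightarrow> Lcm (set (map (per p d) xs)) dvd j"
proof -
  have "(pow_map p d ^^ j) xs = xs \<longleftrightarrow> (\<forall>a\<in>set xs. (fpow p d ^^ j) a = a)"
    unfolding pow_map_iter by (induction xs) auto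
  also have "\<dots> \<longleftrightarrow> (\<forall>a\<in>set xs. per p d a dvd j)"
    using assms per_iff[OF assms(1), of d] by (auto simp: affine_space_def)
  also have "\<dots> \<longleftrightarrow> Lcm (set (map (per p d) xs)) dvd j" by (simp add: Lcm_dvd_iff)
  finally show ?thesis .
qed

lemma Per_k_affine:
  assumes "prime p" "d > 1" "k \<ge> 1"
  shows "Per_k (pow_map p d) (affine_space p N) k
       = {xs \<in> affine_space p N. Lcm (set (map (per p d) xs)) = k}"
proof -
  have "xs \<in> Per_k (pow_map p d) (affine_space p N) k \<longleftrightarrow>
        xs \<in> affine_space p N \<and> Lcm (set (map (per p d) xs)) = k" for xs
  proof (cases "xs \<in> affine_space p N")
    case True
    let ?L = "Lcm (set (map (per p d) xs))"
    have "xs \<in> Per_k (pow_map p d) (affine_space p N) k \<longleftrightarrow>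
          ?L dvd k \<and> (\<forall>j. 1 \<le> j \<and> j < k \<longrightarrow> \<not> ?L dvd j)"
      using True assms pow_map_fix_iff[OF assms(1,2) True] by (simp add: Per_k_def)
    also have "\<dots> \<longleftrightarrow> ?L = k"
    proof
      assume h: "?L dvd k \<and> (\<forall>j. 1 \<le> j \<and> j < k \<longrightarrow> \<not> ?L dvd j)"
      then have "?L \<noteq> 0" using assms(3) by auto
      moreover have "?L \<le> k" using h assms(3) by (simp add: dvd_imp_le)
      ultimately show "?L = k" using h by (metis dvd_refl le_neq_implies_less less_one not_le)
    next
      assume "?L = k" then show "?L dvd k \<and> (\<forall>j. 1 \<le> j \<and> j < k \<longrightarrow> \<not> ?L dvd j)"
        by (auto dest: dvd_imp_le)
    qed
    finally show ?thesis using True by simp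
  qed (simp add: Per_k_def)
  then show ?thesis by auto
qed

lemma card_as_sum: "finite A \<Longrightarrow> card {x \<in> A. P x} = (\<Sum>x\<in>A. if P x then 1 else 0)"
  using sum.inter_filter[of A "\<lambda>_. 1::nat" P] by simp

lemma affine_count:
  assumes "prime p" "d > 1" "k \<ge> 1"
  defines "m \<equiv> m_minus p d"
  shows "card (Per_k (pow_map p d) (affine_space p N) k)
              = (if k = 1 then 1 else 0)
                + (\<Sum>I=1..N. \<Sum>ks\<in>{ks \<in> div_tuples m I. Lcm (set (map (\<lambda>e. ord e d) ks)) = k}.
                      (N choose I) * prod_list (map totient ks))"
proof -
  have m0: "m > 0" unfolding m_def using m_minus_props(4)[OF assms(1)] .
  have finD: "finite {e. e dvd m}" using m0 by (auto intro: finite_divisors_nat)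
  have "card (Per_k (pow_map p d) (affine_space p N) k) = Acnt p d N 1 k"
  proof -
    have "Per_k (pow_map p d) (affine_space p N) k
       = {xs \<in> LL {..<p} N. Lcm (insert 1 (set (map (per p d) xs))) = k}"
      using Per_k_affine[OF assms(1-3)] affine_LL by simp
    then show ?thesis unfolding Acnt_def
      by (simp only:) (rule card_as_sum, auto intro: LL_finite)
  qed
  also have "\<dots> = Bsum m d N 1 k" unfolding m_def by (rule Acnt_Bsum[OF assms(1-3)])
  also have "\<dots> = (\<Sum>I\<in>insert 0 {1..N}. (N choose I) * Tsum m d I 1 k)"
    unfolding Bsum_def by (rule sum.cong) auto
  also have "\<dots> = (if k = 1 then 1 else 0) + (\<Sum>I=1..N. (N choose I) * Tsum m d I 1 k)"
    by (subst sum.insert) (auto simp: Tsum_0)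
  also have "(\<Sum>I=1..N. (N choose I) * Tsum m d I 1 k)
     = (\<Sum>I=1..N. \<Sum>ks\<in>{ks \<in> div_tuples m I. Lcm (set (map (\<lambda>e. ord e d) ks)) = k}.
                      (N choose I) * prod_list (map totient ks))"
  proof (rule sum.cong[OF refl])
    fix I
    have "Tsum m d I 1 k = (\<Sum>ks\<in>{ks \<in> div_tuples m I. Lcm (set (map (\<lambda>e. ord e d) ks)) = k}.
                      prod_list (map totient ks))"
      unfolding Tsum_def div_tuples_LL
      by (subst sum.inter_filter) (auto intro: LL_finite finD)
    then show "(N choose I) * Tsum m d I 1 k = (\<Sum>ks\<in>{ks \<in> div_tuples m I. Lcm (set (map (\<lambda>e. ord e d) ks)) = k}.
                      (N choose I) * prod_list (map totient ks))"
      by (simp add: sum_distrib_left)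
  qed
  finally show ?thesis .
qed

lemma Per_affine:
  assumes "prime p" "d > 1"
  shows "Per (pow_map p d) (affine_space p N) = LL {a. a < p \<and> per p d a \<noteq> 0} N"
proof -
  have "\<And>L::nat. (\<exists>k\<ge>1. L = k) \<longleftrightarrow> L \<noteq> 0" by auto
  have "xs \<in> Per (pow_map p d) (affine_space p N) \<longleftrightarrow> xs \<in> LL {a. a < p \<and> per p d a \<noteq> 0} N" for xs
  proof (cases "xs \<in> affine_space p N")
    case True
    let ?L = "Lcm (set (map (per p d) xs))"
    have "xs \<in> Per (pow_map p d) (affine_space p N) \<longleftrightarrow> (\<exists>k\<ge>1. ?L = k)"
      unfolding Per_def using Per_k_affine[OF assms] True by auto
    also have "\<dots> \<longleftrightarrow> ?L \<noteq> 0"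
      using \<open>\<And>L::nat. (\<exists>k\<ge>1. L = k) \<longleftrightarrow> L \<noteq> 0\<close> by blast
    also have "\<dots> \<longleftrightarrow> (\<forall>a\<in>set xs. per p d a \<noteq> 0)"
      using Lcm_0_iff_nat[of "set (map (per p d) xs)"] by auto
    finally show ?thesis using True by (auto simp: affine_LL LL_def)
  next
    case False
    then show ?thesis by (auto simp: Per_def Per_k_def affine_LL LL_def)
  qed
  then show ?thesis by auto
qed

lemma card_per_nonzero:
  assumes "prime p" "d > 1"
  shows "card {a. a < p \<and> per p d a \<noteq> 0} = m_minus p d + 1"
proof -
  have m0: "m_minus p d > 0" using m_minus_props(4)[OF assms(1)] .
  have e: "{a. a < p \<and> per p d a \<noteq> 0} = {a \<in> {..<p}. per p d a \<noteq> 0}" by auto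
  have "card {a. a < p \<and> per p d a \<noteq> 0} = (\<Sum>a<p. if per p d a \<noteq> 0 then 1 else 0)"
    unfolding e by (rule card_as_sum) simp
  also have "\<dots> = (\<Sum>a<p. (\<lambda>v. if v = 0 then 0 else 1) (per p d a))"
    by (rule sum.cong) auto
  also have "\<dots> = 1 + (\<Sum>e | e dvd m_minus p d. totient e * (if ord e d = 0 then 0 else 1))"
    by (subst sum_per[OF assms]) auto
  also have "(\<Sum>e | e dvd m_minus p d. totient e * (if ord e d = 0 then 0 else 1))
           = (\<Sum>e | e dvd m_minus p d. totient e)"
  proof (rule sum.cong[OF refl])
    fix e assume "e \<in> {e. e dvd m_minus p d}"
    then have "coprime e d" using m_minus_props(2)[OF assms(1)]
      by (auto dest: coprime_imp_coprime intro: dvd_trans)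
    then show "totient e * (if ord e d = 0 then 0 else 1) = totient e" by (simp add: ord_eq_0)
  qed
  also have "\<dots> = m_minus p d" by (rule totient_divisor_sum)
  finally show ?thesis by simp
qed

lemma sum_prod_totient:
  assumes "m > 0"
  shows "(\<Sum>ks\<in>div_tuples m I. prod_list (map totient ks)) = m ^ I"
proof (induction I)
  case 0 then show ?case by (simp add: div_tuples_LL LL_0)
next
  case (Suc I)
  have fin: "finite {e. e dvd m}" using assms by (auto intro: finite_divisors_nat)
  have "(\<Sum>ks\<in>div_tuples m (Suc I). prod_list (map totient ks))
      = (\<Sum>e | e dvd m. totient e * (\<Sum>ks\<in>div_tuples m I. prod_list (map totient ks)))"
    unfolding div_tuples_LL sum_LL_Suc[OF fin] by (simp add: sum_distrib_left)
  also have "\<dots> = m * m ^ I" using Suc by (simp add: sum_distrib_right[symmetric] totient_divisor_sum)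
  finally show ?case by simp
qed

lemma affine_identity:
  assumes "m > 0"
  shows "1 + (\<Sum>I=1..N. (N choose I) * (\<Sum>ks\<in>div_tuples m I. prod_list (map totient ks))) = (m + 1) ^ N"
proof -
  have "(m + 1) ^ N = (\<Sum>I\<le>N. (N choose I) * m ^ I)"
    using binomial_ring[of m 1 N] by simp
  also have "\<dots> = (\<Sum>I\<in>insert 0 {1..N}. (N choose I) * m ^ I)" by (rule sum.cong) auto
  also have "\<dots> = 1 + (\<Sum>I=1..N. (N choose I) * m ^ I)" by (subst sum.insert) auto
  finally show ?thesis using sum_prod_totient[OF assms] by simp
qed

lemma affine_Per_card:
  assumes "prime p" "d > 1"
  shows "card (Per (pow_map p d) (affine_space p N)) = (m_minus p d + 1) ^ N"
  unfolding Per_affine[OF assms] LL_def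
  using card_lists_length_eq[of "{a. a < p \<and> per p d a \<noteq> 0}" N] card_per_nonzero[OF assms]
  by (simp add: conj_commute)



definition scale :: "nat \<Rightarrow> nat \<Rightarrow> nat list \<Rightarrow> nat list" where
  "scale p c xs = map (\<lambda>a. c * a mod p) xs"

definition Vp :: "nat \<Rightarrow> nat list \<Rightarrow> bool" where
  "Vp p xs = (\<forall>a\<in>set xs. a < p)"

lemma proj_class_scale_def: "proj_class p xs = {scale p c xs | c. c \<in> {1..<p}}"
  by (simp add: proj_class_def scale_def)

lemma not_dvd_small: "c \<in> {1..<p} \<Longrightarrow> \<not> (p::nat) dvd c"
  using nat_dvd_not_less[of c p] by auto

lemma scale_scale: "scale p c (scale p c' xs) = scale p (c * c' mod p) xs"
  by (simp add: scale_def mod_mult_right_eq mod_mult_left_eq mult.assoc)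

lemma mult_mod_in:
  fixes p :: nat
  assumes "prime p" "c \<in> {1..<p}" "c' \<in> {1..<p}"
  shows "c * c' mod p \<in> {1..<p}"
proof -
  have "\<not> p dvd c" "\<not> p dvd c'" using not_dvd_small[OF assms(2)] not_dvd_small[OF assms(3)] by auto
  then have "\<not> p dvd c * c'" using assms(1) prime_dvd_mult_iff by blast
  then show ?thesis using assms prime_gt_1_nat[of p]
    by (auto simp: dvd_eq_mod_eq_0 Suc_le_eq)
qed

lemma inv_ex:
  fixes p :: nat
  assumes "prime p" "c \<in> {1..<p}"
  shows "\<exists>c'\<in>{1..<p}. c' * c mod p = 1"
proof -
  have "coprime c p" using assms not_dvd_small[OF assms(2)]
    by (metis coprime_commute prime_imp_coprime)
  then obtain x where x: "[c * x = Suc 0] (mod p)" using cong_solve_coprime_nat by blast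
  have p1: "p > 1" using prime_gt_1_nat[OF assms(1)] .
  have "x mod p * c mod p = 1" using x p1 by (simp add: cong_def mult.commute) (metis mod_mult_right_eq)
  moreover have "x mod p \<noteq> 0" using calculation by (metis mult_0 mod_0 zero_neq_one)
  ultimately show ?thesis using p1 by (intro bexI[of _ "x mod p"]) auto
qed

lemma scale_1: "Vp p xs \<Longrightarrow> scale p 1 xs = xs"
  by (induction xs) (auto simp: scale_def Vp_def)

lemma scale_Suc0: "Vp p xs \<Longrightarrow> scale p (Suc 0) xs = xs"
  using scale_1 by simp

lemma scale_Vp: "p > 0 \<Longrightarrow> Vp p (scale p c xs)"
  by (auto simp: scale_def Vp_def)

lemma class_scale:
  assumes "prime p" "Vp p xs" "c \<in> {1..<p}"
  shows "proj_class p (scale p c xs) = proj_class p xs"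
proof -
  obtain ci where ci: "ci \<in> {1..<p}" "ci * c mod p = 1" using inv_ex[OF assms(1,3)] by blast
  show ?thesis unfolding proj_class_scale_def
  proof safe
    fix c' assume "c' \<in> {1..<p}"
    then show "\<exists>c''. scale p c' (scale p c xs) = scale p c'' xs \<and> c'' \<in> {1..<p}"
      using mult_mod_in[OF assms(1)] assms by (auto simp: scale_scale)
  next
    fix c' assume c': "c' \<in> {1..<p}"
    have "scale p ci (scale p c xs) = xs" using ci assms by (simp add: scale_scale scale_Suc0)
    then have "scale p c' xs = scale p c' (scale p ci (scale p c xs))" by simp
    also have "\<dots> = scale p (c' * ci mod p) (scale p c xs)"
      by (simp only: scale_scale) (metis mod_mult_right_eq mod_mult_left_eq mult.assoc)
    finally show "\<exists>c''. scale p c' xs = scale p c'' (scale p c xs) \<and> c'' \<in> {1..<p}"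
      using mult_mod_in[OF assms(1) c' ci(1)] by blast
  qed
qed

lemma self_mem: "prime p \<Longrightarrow> Vp p xs \<Longrightarrow> xs \<in> proj_class p xs"
proof -
  assume a: "prime p" "Vp p xs"
  have "xs = scale p 1 xs" using scale_1[OF a(2)] by simp
  moreover have "(1::nat) \<in> {1..<p}" using prime_gt_1_nat[OF a(1)] by simp
  ultimately show ?thesis unfolding proj_class_scale_def by blast
qed

lemma class_mem:
  assumes "prime p" "Vp p xs" "ys \<in> proj_class p xs"
  shows "proj_class p ys = proj_class p xs"
proof -
  obtain c where "c \<in> {1..<p}" "ys = scale p c xs" using assms(3) unfolding proj_class_scale_def by auto
  then show ?thesis using class_scale[OF assms(1,2)] by simp
qed

lemma pow_scale: "pow_map p d (scale p c xs) = scale p (c ^ d mod p) (pow_map p d xs)"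
  by (simp add: pow_map_def scale_def power_mod power_mult_distrib mod_mult_eq)

lemma pow_mod_in:
  fixes p :: nat
  assumes "prime p" "c \<in> {1..<p}"
  shows "c ^ d mod p \<in> {1..<p}"
proof -
  have "\<not> p dvd c" using not_dvd_small[OF assms(2)] by auto
  then have "\<not> p dvd c ^ d" using assms(1) prime_dvd_power by blast
  then show ?thesis using assms prime_gt_1_nat[of p]
    by (auto simp: dvd_eq_mod_eq_0 Suc_le_eq)
qed

lemma pow_Vp: "p > 0 \<Longrightarrow> Vp p (pow_map p d xs)"
  by (auto simp: pow_map_def Vp_def)

lemma proj_pow_class:
  assumes "prime p" "Vp p xs"
  shows "proj_pow_map p d (proj_class p xs) = proj_class p (pow_map p d xs)"
proof -
  let ?ys = "SOME ys. ys \<in> proj_class p xs"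
  have "?ys \<in> proj_class p xs" using self_mem[OF assms] by (rule someI)
  then obtain c where c: "c \<in> {1..<p}" "?ys = scale p c xs" unfolding proj_class_scale_def by auto
  have p0: "p > 0" using prime_gt_1_nat[OF assms(1)] by simp
  show ?thesis unfolding proj_pow_map_def c(2) pow_scale
    by (rule class_scale[OF assms(1) pow_Vp[OF p0] pow_mod_in[OF assms(1) c(1)]])
qed

definition vec :: "nat \<Rightarrow> nat \<Rightarrow> nat list \<Rightarrow> nat list" where
  "vec N D y = replicate (N - D) 0 @ 1 # y"

lemma rep_eq:
  "replicate i 0 @ (a::nat) # r = replicate i' 0 @ b # r' \<Longrightarrow> a \<noteq> 0 \<Longrightarrow> b \<noteq> 0
     \<Longrightarrow> i = i' \<and> a = b \<and> r = r'"
proof (induction i arbitrary: i')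
  case 0 then show ?case by (cases i') auto
next
  case (Suc i) then show ?case by (cases i') auto
qed

lemma split_nonzero:
  "\<exists>a\<in>set (xs::nat list). a \<noteq> 0 \<Longrightarrow> \<exists>i a r. xs = replicate i 0 @ a # r \<and> a \<noteq> 0"
proof (induction xs)
  case Nil then show ?case by simp
next
  case (Cons x xs)
  show ?case
  proof (cases "x = 0")
    case True
    then obtain i a r where "xs = replicate i 0 @ a # r" "a \<noteq> 0" using Cons by auto
    then have "x # xs = replicate (Suc i) 0 @ a # r" "a \<noteq> 0" using True by auto
    then show ?thesis by blast
  next
    case False
    have "x # xs = replicate 0 0 @ x # xs" by simp
    then show ?thesis using False by blast
  qed
qed

definition Phi :: "nat \<Rightarrow> nat \<Rightarrow> nat \<times> nat list \<Rightarrow> nat list set" where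
  "Phi p N x = proj_class p (vec N (fst x) (snd x))"

definition Gm :: "nat \<Rightarrow> nat \<Rightarrow> nat \<times> nat list \<Rightarrow> nat \<times> nat list" where
  "Gm p d x = (fst x, pow_map p d (snd x))"

lemma vec_Vp: "p > 1 \<Longrightarrow> y \<in> affine_space p D \<Longrightarrow> Vp p (vec N D y)"
  by (auto simp: vec_def Vp_def affine_space_def)

lemma scale_vec: "c < p \<Longrightarrow> scale p c (vec N D y) = replicate (N - D) 0 @ c # scale p c y"
  by (simp add: scale_def vec_def)




lemma Phi_bij:
  assumes "prime p"
  shows "bij_betw (Phi p N) (Sigma {0..N} (affine_space p)) (proj_space p N)"
proof -
  have p1: "p > 1" using prime_gt_1_nat[OF assms] .
  show ?thesis unfolding bij_betw_def
  proof (intro conjI)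
    show "inj_on (Phi p N) (Sigma {0..N} (affine_space p))"
    proof (rule inj_onI, clarsimp)
      fix D y D' y'
      assume D: "D \<le> N" "y \<in> affine_space p D" "D' \<le> N" "y' \<in> affine_space p D'"
        and eq: "Phi p N (D, y) = Phi p N (D', y')"
      have "vec N D' y' \<in> proj_class p (vec N D y)"
        using eq self_mem[OF assms vec_Vp[OF p1 D(4)]] by (simp add: Phi_def)
      then obtain c where c: "c \<in> {1..<p}" "vec N D' y' = scale p c (vec N D y)"
        unfolding proj_class_scale_def by auto
      then have "vec N D' y' = replicate (N - D) 0 @ c # scale p c y"
        using scale_vec[of c p N D y] by simp
      then have "replicate (N - D) 0 @ c # scale p c y = replicate (N - D') 0 @ 1 # y'"
        by (simp add: vec_def)
      moreover have "c \<noteq> 0" using c(1) by simp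
      ultimately have h: "N - D = N - D'" "c = 1" "scale p c y = y'"
        using rep_eq[of "N - D" c "scale p c y" "N - D'" 1 y'] by auto
      have "Vp p y" using D(2) by (auto simp: Vp_def affine_space_def)
      then have "y = y'" using h scale_1[of p y] by simp
      moreover have "D = D'" using h(1) D(1,3) by simp
      ultimately show "D = D' \<and> y = y'" by simp
    qed
  next
    show "Phi p N ` Sigma {0..N} (affine_space p) = proj_space p N"
    proof safe
      fix D y assume D: "D \<in> {0..N}" "y \<in> affine_space p D"
      show "Phi p N (D, y) \<in> proj_space p N" unfolding proj_space_def Phi_def
        using D p1 by (intro CollectI exI[of _ "vec N D y"]) (auto simp: vec_def affine_space_def)
    next
      fix C assume "C \<in> proj_space p N"
      then obtain xs where xs: "C = proj_class p xs" "xs \<in> affine_space p (Suc N)" "\<exists>a\<in>set xs. a \<noteq> 0"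
        unfolding proj_space_def by auto
      obtain i a r where ir: "xs = replicate i 0 @ a # r" "a \<noteq> 0" using split_nonzero[OF xs(3)] by blast
      have a: "a \<in> {1..<p}" using xs(2) ir by (auto simp: affine_space_def)
      obtain c where c: "c \<in> {1..<p}" "c * a mod p = 1" using inv_ex[OF assms a] by blast
      have Vx: "Vp p xs" using xs(2) by (auto simp: Vp_def affine_space_def)
      let ?D = "length r"
      have len: "i + Suc ?D = Suc N" using xs(2) ir by (auto simp: affine_space_def)
      have "scale p c xs = vec N ?D (scale p c r)"
        using ir c len by (auto simp: scale_def vec_def)
      then have "Phi p N (?D, scale p c r) = C"
        using class_scale[OF assms Vx c(1)] xs(1) by (simp add: Phi_def)
      moreover have "(?D, scale p c r) \<in> Sigma {0..N} (affine_space p)"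
        using len p1 by (auto simp: affine_space_def scale_def)
      ultimately show "C \<in> Phi p N ` Sigma {0..N} (affine_space p)" by (metis image_eqI)
    qed
  qed
qed

lemma Phi_conj:
  assumes "prime p" "d > 1" "x \<in> Sigma {0..N} (affine_space p)"
  shows "proj_pow_map p d (Phi p N x) = Phi p N (Gm p d x)"
proof -
  have p1: "p > 1" using prime_gt_1_nat[OF assms(1)] .
  obtain D y where x: "x = (D, y)" "y \<in> affine_space p D" using assms(3) by auto
  have "pow_map p d (vec N D y) = vec N D (pow_map p d y)"
    using assms(2) p1 by (simp add: pow_map_def vec_def power_0_left)
  then show ?thesis
    using proj_pow_class[OF assms(1) vec_Vp[OF p1 x(2)]] x by (simp add: Phi_def Gm_def)
qed

lemma Gm_maps: "prime p \<Longrightarrow> x \<in> Sigma {0..N} (affine_space p) \<Longrightarrow> Gm p d x \<in> Sigma {0..N} (affine_space p)"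
  using prime_gt_1_nat[of p] by (auto simp: Gm_def affine_space_def pow_map_def)

lemma conj_iter:
  assumes "\<forall>x\<in>X. G x \<in> X" "\<forall>x\<in>X. F (h x) = h (G x)" "x \<in> X"
  shows "(F ^^ j) (h x) = h ((G ^^ j) x) \<and> (G ^^ j) x \<in> X"
  using assms by (induction j) auto

lemma conj_Per_k:
  assumes "bij_betw h X Y" "\<forall>x\<in>X. G x \<in> X" "\<forall>x\<in>X. F (h x) = h (G x)"
  shows "Per_k F Y k = h ` Per_k G X k"
proof -
  have inj: "inj_on h X" and img: "h ` X = Y" using assms(1) by (auto simp: bij_betw_def)
  have fx: "(F ^^ j) (h x) = h x \<longleftrightarrow> (G ^^ j) x = x" if "x \<in> X" for x j
    using conj_iter[OF assms(2,3) that, of j] inj that by (auto dest: inj_onD)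
  show ?thesis
  proof safe
    fix y assume "y \<in> Per_k F Y k"
    then obtain x where x: "x \<in> X" "y = h x" using img by (auto simp: Per_k_def)
    then show "y \<in> h ` Per_k G X k" using \<open>y \<in> Per_k F Y k\<close> fx[OF x(1)]
      by (auto simp: Per_k_def)
  next
    fix x assume "x \<in> Per_k G X k"
    then show "h x \<in> Per_k F Y k" using fx img by (auto simp: Per_k_def)
  qed
qed

lemma Gm_iter: "(Gm p d ^^ j) (D, y) = (D, (pow_map p d ^^ j) y)"
  by (induction j) (auto simp: Gm_def)

lemma Per_k_Sigma:
  "Per_k (Gm p d) (Sigma A (affine_space p)) k = Sigma A (\<lambda>D. Per_k (pow_map p d) (affine_space p D) k)"
  by (auto simp: Per_k_def Gm_iter)

lemma Per_Sigma:
  "Per (Gm p d) (Sigma A (affine_space p)) = Sigma A (\<lambda>D. Per (pow_map p d) (affine_space p D))"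
  unfolding Per_def Per_k_Sigma by auto

lemma finite_affine: "finite (affine_space p D)"
  unfolding affine_LL by (rule LL_finite) simp

lemma proj_Per_k_card:
  assumes "prime p" "d > 1"
  shows "card (Per_k (proj_pow_map p d) (proj_space p N) k)
       = (\<Sum>D=0..N. card (Per_k (pow_map p d) (affine_space p D) k))"
proof -
  have bij: "bij_betw (Phi p N) (Sigma {0..N} (affine_space p)) (proj_space p N)" by (rule Phi_bij[OF assms(1)])
  have e: "Per_k (proj_pow_map p d) (proj_space p N) k = Phi p N ` Per_k (Gm p d) (Sigma {0..N} (affine_space p)) k"
    by (rule conj_Per_k[OF bij]) (use Gm_maps[OF assms(1)] Phi_conj[OF assms] in auto)
  have sub: "Per_k (Gm p d) (Sigma {0..N} (affine_space p)) k \<subseteq> Sigma {0..N} (affine_space p)"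
    by (auto simp: Per_k_def)
  have "card (Per_k (proj_pow_map p d) (proj_space p N) k) = card (Per_k (Gm p d) (Sigma {0..N} (affine_space p)) k)"
    unfolding e by (rule card_image[OF inj_on_subset[OF _ sub]]) (use bij in \<open>simp add: bij_betw_def\<close>)
  also have "\<dots> = (\<Sum>D=0..N. card (Per_k (pow_map p d) (affine_space p D) k))"
    unfolding Per_k_Sigma
    by (rule card_SigmaI) (auto intro: finite_subset[OF _ finite_affine] simp: Per_k_def)
  finally show ?thesis .
qed

lemma proj_Per_card:
  assumes "prime p" "d > 1"
  shows "card (Per (proj_pow_map p d) (proj_space p N))
       = (\<Sum>D=0..N. card (Per (pow_map p d) (affine_space p D)))"
proof -
  have bij: "bij_betw (Phi p N) (Sigma {0..N} (affine_space p)) (proj_space p N)" by (rule Phi_bij[OF assms(1)])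
  have PK: "Per_k (proj_pow_map p d) (proj_space p N) k = Phi p N ` Per_k (Gm p d) (Sigma {0..N} (affine_space p)) k" for k
    by (rule conj_Per_k[OF bij]) (use Gm_maps[OF assms(1)] Phi_conj[OF assms] in auto)
  have "Per (proj_pow_map p d) (proj_space p N) = Phi p N ` Per (Gm p d) (Sigma {0..N} (affine_space p))"
    unfolding Per_def image_UN PK by blast
  moreover have sub: "Per (Gm p d) (Sigma {0..N} (affine_space p)) \<subseteq> Sigma {0..N} (affine_space p)"
    by (auto simp: Per_def Per_k_def)
  ultimately have "card (Per (proj_pow_map p d) (proj_space p N)) = card (Per (Gm p d) (Sigma {0..N} (affine_space p)))"
    by (simp only:) (rule card_image[OF inj_on_subset[OF _ sub]], use bij in \<open>simp add: bij_betw_def\<close>)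
  also have "\<dots> = (\<Sum>D=0..N. card (Per (pow_map p d) (affine_space p D)))"
    unfolding Per_Sigma
    by (rule card_SigmaI) (auto intro: finite_subset[OF _ finite_affine] simp: Per_def Per_k_def)
  finally show ?thesis .
qed


theorem mainTheorem3:
  fixes p d N :: nat
  assumes "prime p" and "d > 1" and "N \<ge> 1"
  defines "m \<equiv> m_minus p d"
  shows "(\<forall>k::nat. k \<ge> 1 \<longrightarrow>
            card (Per_k (pow_map p d) (affine_space p N) k)
              = (if k = 1 then 1 else 0)
                + (\<Sum>I=1..N. \<Sum>ks\<in>{ks \<in> div_tuples m I. Lcm (set (map (\<lambda>e. ord e d) ks)) = k}.
                      (N choose I) * prod_list (map totient ks))
          \<and> card (Per_k (proj_pow_map p d) (proj_space p N) k)
              = (\<Sum>D=0..N. (if k = 1 then 1 else 0)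
                + (\<Sum>I=1..D. \<Sum>ks\<in>{ks \<in> div_tuples m I. Lcm (set (map (\<lambda>e. ord e d) ks)) = k}.
                      (D choose I) * prod_list (map totient ks))))
       \<and> card (Per (pow_map p d) (affine_space p N))
           = 1 + (\<Sum>I=1..N. (N choose I) * (\<Sum>ks\<in>div_tuples m I. prod_list (map totient ks)))
       \<and> 1 + (\<Sum>I=1..N. (N choose I) * (\<Sum>ks\<in>div_tuples m I. prod_list (map totient ks))) = (m + 1) ^ N
       \<and> card (Per (proj_pow_map p d) (proj_space p N))
           = (\<Sum>D=0..N. 1 + (\<Sum>I=1..D. (D choose I) * (\<Sum>ks\<in>div_tuples m I. prod_list (map totient ks))))
       \<and> (\<Sum>D=0..N. 1 + (\<Sum>I=1..D. (D choose I) * (\<Sum>ks\<in>div_tuples m I. prod_list (map totient ks))))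
           = (\<Sum>D=0..N. (m + 1) ^ D)"
  proof -
  have m0: "m > 0" unfolding m_def using m_minus_props(4)[OF assms(1)] .
  have A: "\<forall>k::nat. k \<ge> 1 \<longrightarrow>
            card (Per_k (pow_map p d) (affine_space p N) k)
              = (if k = 1 then 1 else 0)
                + (\<Sum>I=1..N. \<Sum>ks\<in>{ks \<in> div_tuples m I. Lcm (set (map (\<lambda>e. ord e d) ks)) = k}.
                      (N choose I) * prod_list (map totient ks))
          \<and> card (Per_k (proj_pow_map p d) (proj_space p N) k)
              = (\<Sum>D=0..N. (if k = 1 then 1 else 0)
                + (\<Sum>I=1..D. \<Sum>ks\<in>{ks \<in> div_tuples m I. Lcm (set (map (\<lambda>e. ord e d) ks)) = k}.
                      (D choose I) * prod_list (map totient ks)))"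
  proof (intro allI impI conjI)
    fix k :: nat assume k: "k \<ge> 1"
    show "card (Per_k (pow_map p d) (affine_space p N) k)
              = (if k = 1 then 1 else 0)
                + (\<Sum>I=1..N. \<Sum>ks\<in>{ks \<in> div_tuples m I. Lcm (set (map (\<lambda>e. ord e d) ks)) = k}.
                      (N choose I) * prod_list (map totient ks))"
      unfolding m_def by (rule affine_count[OF assms(1,2) k])
    show "card (Per_k (proj_pow_map p d) (proj_space p N) k)
              = (\<Sum>D=0..N. (if k = 1 then 1 else 0)
                + (\<Sum>I=1..D. \<Sum>ks\<in>{ks \<in> div_tuples m I. Lcm (set (map (\<lambda>e. ord e d) ks)) = k}.
                      (D choose I) * prod_list (map totient ks)))"
      unfolding proj_Per_k_card[OF assms(1,2)] m_def
      by (rule sum.cong[OF refl], rule affine_count[OF assms(1,2) k])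
  qed
  have B: "1 + (\<Sum>I=1..D. (D choose I) * (\<Sum>ks\<in>div_tuples m I. prod_list (map totient ks))) = (m + 1) ^ D" for D
    by (rule affine_identity[OF m0])
  have C: "card (Per (pow_map p d) (affine_space p D)) = (m + 1) ^ D" for D
    unfolding m_def by (rule affine_Per_card[OF assms(1,2)])
  show ?thesis
    using A B C proj_Per_card[OF assms(1,2), of N] by simp
qed

end
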